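(* Let $i\in\{3',3'',4\}$ and let $\tau$ be a finite topology on a finite set $X$. Then there exists a finite topology $\tau'$ on $X$ such that $G_i(\tau)\cong G_i(\tau')$ and the height of $\tau'$ is at most $3$.
   Context: A finite topology on $X$ is a family of subsets (open sets) containing $\emptyset,X$ and closed under unions and intersections; complements of open sets are closed. $m_\tau(x)$ is the intersection of all open sets containing $x$. The height of $\tau$ is the largest $h$ such that there are distinct $v_1,\dots,v_h\in X$ with $m_\tau(v_1)\subseteq\cdots\subseteq m_\tau(v_h)$. For distinct $x,y$, let (a): exist closed $J$, open $U_J,U_y$ with $x\in J\subseteq U_J$, $y\in U_y$, $U_J\cap U_y=\emptyset$; (b): exist closed $K$, open $U_x,U_K$ with $x\in U_x$, $y\in K\subseteq U_K$, $U_x\cap U_K=\emptyset$. $x,y$ are $T_{3'}$-separated if (a) or (b), $T_{3''}$-separated if (a) and (b), $T_4$-separated if there exist closed $J\ni x$, $K\ni y$ and disjoint open $U_J\supseteq J$, $U_K\supseteq K$. $G_i(\tau)$ is the simple graph on $X$ where distinct $x,y$ are adjacent iff not $T_i$-separated. *)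

theory Defs
  imports Main
begin

definition finite_topology :: "'a set \<Rightarrow> 'a set set \<Rightarrow> bool" where
  "finite_topology X T \<longleftrightarrow> finite X \<and> T \<subseteq> Pow X \<and> {} \<in> T \<and> X \<in> T \<and>
     (\<forall>S. S \<subseteq> T \<longrightarrow> \<Union>S \<in> T) \<and>
     (\<forall>S. S \<subseteq> T \<and> S \<noteq> {} \<longrightarrow> \<Inter>S \<in> T)"

definition open_in_top :: "'a set set \<Rightarrow> 'a set \<Rightarrow> bool" where
  "open_in_top T U \<longleftrightarrow> U \<in> T"

definition closed_in_top :: "'a set \<Rightarrow> 'a set set \<Rightarrow> 'a set \<Rightarrow> bool" where
  "closed_in_top X T K \<longleftrightarrow> K \<subseteq> X \<and> X - K \<in> T"

definition min_open :: "'a set set \<Rightarrow> 'a \<Rightarrow> 'a set" where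
  "min_open T x = \<Inter>{U \<in> T. x \<in> U}"

definition top_height :: "'a set \<Rightarrow> 'a set set \<Rightarrow> nat" where
  "top_height X T = Max {h. \<exists>v :: nat \<Rightarrow> 'a. inj_on v {..<h} \<and> v ` {..<h} \<subseteq> X \<and>
       (\<forall>j. Suc j < h \<longrightarrow> min_open T (v j) \<subseteq> min_open T (v (Suc j)))}"

definition sep_a :: "'a set \<Rightarrow> 'a set set \<Rightarrow> 'a \<Rightarrow> 'a \<Rightarrow> bool" where
  "sep_a X T x y \<longleftrightarrow> (\<exists>J UJ Uy. closed_in_top X T J \<and> UJ \<in> T \<and> Uy \<in> T \<and>
      x \<in> J \<and> J \<subseteq> UJ \<and> y \<in> Uy \<and> UJ \<inter> Uy = {})"

definition sep_b :: "'a set \<Rightarrow> 'a set set \<Rightarrow> 'a \<Rightarrow> 'a \<Rightarrow> bool" where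
  "sep_b X T x y \<longleftrightarrow> (\<exists>K Ux UK. closed_in_top X T K \<and> Ux \<in> T \<and> UK \<in> T \<and>
      x \<in> Ux \<and> y \<in> K \<and> K \<subseteq> UK \<and> Ux \<inter> UK = {})"

definition T3p_sep :: "'a set \<Rightarrow> 'a set set \<Rightarrow> 'a \<Rightarrow> 'a \<Rightarrow> bool" where
  "T3p_sep X T x y \<longleftrightarrow> sep_a X T x y \<or> sep_b X T x y"

definition T3pp_sep :: "'a set \<Rightarrow> 'a set set \<Rightarrow> 'a \<Rightarrow> 'a \<Rightarrow> bool" where
  "T3pp_sep X T x y \<longleftrightarrow> sep_a X T x y \<and> sep_b X T x y"

definition T4_sep :: "'a set \<Rightarrow> 'a set set \<Rightarrow> 'a \<Rightarrow> 'a \<Rightarrow> bool" where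
  "T4_sep X T x y \<longleftrightarrow> (\<exists>J K UJ UK. closed_in_top X T J \<and> closed_in_top X T K \<and>
      x \<in> J \<and> y \<in> K \<and> UJ \<in> T \<and> UK \<in> T \<and> J \<subseteq> UJ \<and> K \<subseteq> UK \<and> UJ \<inter> UK = {})"

datatype sep_axiom = T3p | T3pp | T4

fun sep_of :: "sep_axiom \<Rightarrow> 'a set \<Rightarrow> 'a set set \<Rightarrow> 'a \<Rightarrow> 'a \<Rightarrow> bool" where
  "sep_of T3p = T3p_sep"
| "sep_of T3pp = T3pp_sep"
| "sep_of T4 = T4_sep"

definition G_adj :: "sep_axiom \<Rightarrow> 'a set \<Rightarrow> 'a set set \<Rightarrow> 'a \<Rightarrow> 'a \<Rightarrow> bool" where
  "G_adj i X T x y \<longleftrightarrow> x \<in> X \<and> y \<in> X \<and> x \<noteq> y \<and> \<not> sep_of i X T x y"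

definition graph_iso :: "'a set \<Rightarrow> ('a \<Rightarrow> 'a \<Rightarrow> bool) \<Rightarrow> 'b set \<Rightarrow> ('b \<Rightarrow> 'b \<Rightarrow> bool) \<Rightarrow> bool" where
  "graph_iso V1 E1 V2 E2 \<longleftrightarrow> (\<exists>f. bij_betw f V1 V2 \<and>
      (\<forall>x\<in>V1. \<forall>y\<in>V1. E1 x y \<longleftrightarrow> E2 (f x) (f y)))"

end

theory Submission
  imports Defs
begin

definition AA :: "'a set \<Rightarrow> ('a \<Rightarrow> 'a \<Rightarrow> bool) \<Rightarrow> 'a \<Rightarrow> 'a \<Rightarrow> bool" where
  "AA X le x y \<longleftrightarrow> (\<exists>w\<in>X. \<exists>z\<in>X. le x w \<and> le z w \<and> le z y)"

definition BB :: "'a set \<Rightarrow> ('a \<Rightarrow> 'a \<Rightarrow> bool) \<Rightarrow> 'a \<Rightarrow> 'a \<Rightarrow> bool" where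
  "BB X le x y \<longleftrightarrow> (\<exists>w1\<in>X. \<exists>w2\<in>X. \<exists>z\<in>X. le x w1 \<and> le z w1 \<and> le z w2 \<and> le y w2)"

locale fpre =
  fixes X :: "'a set" and le :: "'a \<Rightarrow> 'a \<Rightarrow> bool"
  assumes finX: "finite X"
    and rfl: "\<And>a. a \<in> X \<Longrightarrow> le a a"
    and trn: "\<And>a b c. a \<in> X \<Longrightarrow> b \<in> X \<Longrightarrow> c \<in> X \<Longrightarrow> le a b \<Longrightarrow> le b c \<Longrightarrow> le a c"
begin

definition mxp where "mxp x \<longleftrightarrow> x \<in> X \<and> (\<forall>u\<in>X. le x u \<longrightarrow> le u x)"
definition mnp where "mnp x \<longleftrightarrow> x \<in> X \<and> (\<forall>u\<in>X. le u x \<longrightarrow> le x u)"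
definition rp where "rp b = (SOME c. c \<in> X \<and> le c b \<and> le b c)"
definition R where "R a b \<longleftrightarrow> a = b \<or> (le a b \<and> \<not> le b a \<and> (mnp a \<or> mxp b))
   \<or> (mnp a \<and> mxp a \<and> le a b \<and> le b a \<and> a = rp b)"

lemma ex_max: assumes "w \<in> X" shows "\<exists>v. mxp v \<and> le w v"
proof -
  let ?P = "\<lambda>v. v \<in> X \<and> le w v"
  let ?m = "\<lambda>v. card {u\<in>X. le v u}"
  have "?P w" using assms rfl by auto
  then obtain v where v: "?P v" "\<And>y. ?P y \<Longrightarrow> ?m v \<le> ?m y"
    using ex_has_least_nat[of ?P w ?m] by blast
  have "mxp v" unfolding mxp_def
  proof (intro conjI ballI impI)
    show "v \<in> X" using v by auto
    fix u assume u: "u \<in> X" "le v u"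
    have P: "?P u" using u v(1) trn[of w v u] assms by blast
    have sub: "{x\<in>X. le u x} \<subseteq> {x\<in>X. le v x}" using u v(1) by (auto intro: trn[of v u])
    have le1: "?m v \<le> ?m u" using v(2) P by blast
    have finB: "finite ({x\<in>X. le v x})" using finX by auto
    have le2: "card ({x\<in>X. le u x}) \<le> card ({x\<in>X. le v x})" using card_mono[OF finB sub] .
    have "{x\<in>X. le u x} = {x\<in>X. le v x}"
      using card_subset_eq[OF finB sub] le1 le2 by linarith
    moreover have "v \<in> {x\<in>X. le v x}" using v rfl by auto
    ultimately show "le u v" by auto
  qed
  thus ?thesis using v by auto
qed

lemma ex_min: assumes "w \<in> X" shows "\<exists>v. mnp v \<and> le v w"
proof -
  let ?P = "\<lambda>v. v \<in> X \<and> le v w"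
  let ?m = "\<lambda>v. card {u\<in>X. le u v}"
  have "?P w" using assms rfl by auto
  then obtain v where v: "?P v" "\<And>y. ?P y \<Longrightarrow> ?m v \<le> ?m y"
    using ex_has_least_nat[of ?P w ?m] by blast
  have "mnp v" unfolding mnp_def
  proof (intro conjI ballI impI)
    show "v \<in> X" using v by auto
    fix u assume u: "u \<in> X" "le u v"
    have P: "?P u" using u v(1) trn[of u v w] assms by blast
    have sub: "{x\<in>X. le x u} \<subseteq> {x\<in>X. le x v}" using u v(1) by (auto intro: trn[of _ u v])
    have le1: "?m v \<le> ?m u" using v(2) P by blast
    have finB: "finite ({x\<in>X. le x v})" using finX by auto
    have le2: "card ({x\<in>X. le x u}) \<le> card ({x\<in>X. le x v})" using card_mono[OF finB sub] .
    have "{x\<in>X. le x u} = {x\<in>X. le x v}"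
      using card_subset_eq[OF finB sub] le1 le2 by linarith
    moreover have "v \<in> {x\<in>X. le x v}" using v rfl by auto
    ultimately show "le v u" by auto
  qed
  thus ?thesis using v by auto
qed

lemma rp_prop: "b \<in> X \<Longrightarrow> rp b \<in> X \<and> le (rp b) b \<and> le b (rp b)"
  unfolding rp_def by (rule someI[of _ b]) (auto intro: rfl)

lemma rp_eq: assumes "a \<in> X" "b \<in> X" "le a b" "le b a" shows "rp a = rp b"
proof -
  have "(\<lambda>c. c \<in> X \<and> le c a \<and> le a c) = (\<lambda>c. c \<in> X \<and> le c b \<and> le b c)"
    using assms trn by blast
  thus ?thesis unfolding rp_def by simp
qed

lemma mxp_eq: "mxp a \<Longrightarrow> b \<in> X \<Longrightarrow> le a b \<Longrightarrow> le b a \<Longrightarrow> mxp b"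
  unfolding mxp_def using trn by blast
lemma mnp_eq: "mnp a \<Longrightarrow> b \<in> X \<Longrightarrow> le a b \<Longrightarrow> le b a \<Longrightarrow> mnp b"
  unfolding mnp_def using trn by blast

lemma R_le: "a \<in> X \<Longrightarrow> R a b \<Longrightarrow> le a b"
  unfolding R_def using rfl by auto

lemma R_refl: "R a a" unfolding R_def by auto

lemma R_trans: assumes "a \<in> X" "b \<in> X" "c \<in> X" "R a b" "R b c" shows "R a c"
proof -
  have ab: "le a b" "le b c" using assms R_le by auto
  have ac: "le a c" using trn ab assms by blast
  show ?thesis
  proof (cases "a = b \<or> b = c")
    case True thus ?thesis using assms(4,5) by (elim disjE) simp_all
  next
    case False
    then have nb: "a \<noteq> b" "b \<noteq> c" by auto
    have r1: "(\<not> le b a \<and> (mnp a \<or> mxp b)) \<or> (mnp a \<and> mxp a \<and> le b a \<and> a = rp b)"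
      using assms(4) nb ab unfolding R_def by auto
    have r2: "(\<not> le c b \<and> (mnp b \<or> mxp c)) \<or> (mnp b \<and> mxp b \<and> le c b \<and> b = rp c)"
      using assms(5) nb ab unfolding R_def by auto
    show ?thesis
    proof (cases "le b a")
      case False
      then have "mnp a \<or> mxp b" using r1 by auto
      have "\<not> mnp b" using False ab assms unfolding mnp_def by auto
      then have h: "\<not> le c b" "mnp b \<or> mxp c" using r2 by auto
      have "\<not> le c a" using h assms trn ab by blast
      moreover have "\<not> mxp b" using h ab assms unfolding mxp_def by auto
      then have "mnp a" using \<open>mnp a \<or> mxp b\<close> by auto
      ultimately show ?thesis unfolding R_def using ac by blast
    next
      case True
      then have h: "mnp a" "mxp a" "a = rp b" using r1 by auto
      have "mxp b" using mxp_eq h ab True assms by blast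
      then have "le c b" using ab assms unfolding mxp_def by auto
      then have "b = rp c" using r2 by auto
      moreover have "rp b = rp c" using rp_eq assms ab \<open>le c b\<close> by blast
      ultimately show ?thesis using h nb by auto
    qed
  qed
qed

lemma chain: assumes X: "a \<in> X" "b \<in> X" "c \<in> X" "d \<in> X" and ne: "a \<noteq> b" "b \<noteq> c" "c \<noteq> d"
  and r: "R a b" "R b c" "R c d" shows False
proof -
  have ab: "le a b" "le b c" "le c d" using X r R_le by auto
  have r1: "(\<not> le b a \<and> (mnp a \<or> mxp b)) \<or> (mnp a \<and> mxp a \<and> le b a \<and> a = rp b)"
    using r(1) ne ab unfolding R_def by auto
  have r2: "(\<not> le c b \<and> (mnp b \<or> mxp c)) \<or> (mnp b \<and> mxp b \<and> le c b \<and> b = rp c)"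
    using r(2) ne ab unfolding R_def by auto
  have r3: "(\<not> le d c \<and> (mnp c \<or> mxp d)) \<or> (mnp c \<and> mxp c \<and> le d c \<and> c = rp d)"
    using r(3) ne ab unfolding R_def by auto
  show False
  proof (cases "\<not> le c b")
    case True
    then have "mnp b \<or> mxp c" using r2 by auto
    thus False
    proof
      assume "mnp b"
      then have "le b a" using ab X unfolding mnp_def by auto
      then have "mxp a" using r1 by auto
      then have "mxp b" using mxp_eq ab X \<open>le b a\<close> by blast
      thus False using True ab X unfolding mxp_def by auto
    next
      assume "mxp c"
      then have "le d c" using ab X unfolding mxp_def by auto
      then have "mnp c" using r3 by auto
      thus False using True ab X unfolding mnp_def by auto
    qed
  next
    case False
    then have h: "mnp b" "b = rp c" using r2 by auto
    then have "le b a" using ab X unfolding mnp_def by auto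
    then have "a = rp b" using r1 by auto
    moreover have "rp b = rp c" using rp_eq X ab False by blast
    ultimately show False using h ne by auto
  qed
qed

lemma iso_case: assumes "x \<in> X" "y \<in> X" "mnp x" "mxp x" "le x y" "le y x"
  shows "R (rp x) x" "R (rp x) y"
proof -
  have p: "rp x \<in> X" "le (rp x) x" "le x (rp x)" using rp_prop assms by auto
  have "mnp (rp x)" "mxp (rp x)" using mnp_eq mxp_eq p assms by blast+
  moreover have "rp x = rp y" using rp_eq assms by blast
  moreover have "rp (rp x) = rp x" using rp_eq p assms(1) by metis
  moreover have "le (rp x) y" "le y (rp x)" using p assms trn by blast+
  ultimately show "R (rp x) x" "R (rp x) y" unfolding R_def using p by auto
qed

lemma pick_max: assumes "x \<in> X" "w \<in> X" "le x w"
  shows "\<exists>w'. mxp w' \<and> le w w' \<and> R x w'"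
proof (cases "mxp x")
  case True
  then have "le w x" using assms unfolding mxp_def by auto
  thus ?thesis using True R_refl by blast
next
  case False
  obtain v where v: "mxp v" "le w v" using ex_max assms by blast
  have vX: "v \<in> X" using v unfolding mxp_def by auto
  have "le x v" using trn assms v vX by blast
  moreover have "\<not> le v x" using mxp_eq v False assms vX \<open>le x v\<close> by blast
  ultimately have "R x v" unfolding R_def using v by auto
  thus ?thesis using v by blast
qed

lemma pick_min: assumes "y \<in> X" "z \<in> X" "le z y"
  shows "\<exists>z'. mnp z' \<and> le z' z \<and> R z' y"
proof (cases "mnp y")
  case True
  then have "le y z" using assms unfolding mnp_def by auto
  thus ?thesis using True R_refl by blast
next
  case False
  obtain v where v: "mnp v" "le v z" using ex_min assms by blast
  have vX: "v \<in> X" using v unfolding mnp_def by auto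
  have "le v y" using trn assms v vX by blast
  moreover have "\<not> le y v" using mnp_eq v False assms vX \<open>le v y\<close> by blast
  ultimately have "R v y" unfolding R_def using v by auto
  thus ?thesis using v by blast
qed

lemma minmax: assumes "mnp z" "mxp w" "le z w" "\<not> (mnp x \<and> mxp x \<and> le x y \<and> le y x)"
  "x \<in> X" "y \<in> X" "le x w" "le z y"
  shows "R z w"
proof (cases "le w z")
  case False thus ?thesis using assms unfolding R_def by auto
next
  case True
  have X: "z \<in> X" "w \<in> X" using assms unfolding mnp_def mxp_def by auto
  have "le x z" using trn True assms X by blast
  then have "le z x" using assms X unfolding mnp_def by auto
  have "mxp z" using mxp_eq assms X True by blast
  then have "le y z" using assms X unfolding mxp_def by auto
  have "mnp x" "mxp x" using mnp_eq mxp_eq assms X \<open>le x z\<close> \<open>le z x\<close> \<open>mxp z\<close> by blast+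
  moreover have "le x y" "le y x" using trn X assms \<open>le x z\<close> \<open>le z x\<close> \<open>le y z\<close> by blast+
  ultimately show ?thesis using assms by blast
qed

lemma AA_R: assumes "x \<in> X" "y \<in> X" shows "AA X le x y \<longleftrightarrow> AA X R x y"
proof
  assume "AA X R x y"
  then obtain w z where "w \<in> X" "z \<in> X" "R x w" "R z w" "R z y" unfolding AA_def by blast
  moreover have "le x w" "le z w" "le z y" using R_le calculation assms by blast+
  ultimately show "AA X le x y" unfolding AA_def by blast
next
  assume "AA X le x y"
  then obtain w z where wz: "w \<in> X" "z \<in> X" "le x w" "le z w" "le z y" unfolding AA_def by blast
  show "AA X R x y"
  proof (cases "mnp x \<and> mxp x \<and> le x y \<and> le y x")
    case True
    have "rp x \<in> X" using rp_prop assms by auto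
    thus ?thesis using iso_case[of x y] True assms R_refl unfolding AA_def by blast
  next
    case False
    obtain w' where w': "mxp w'" "le w w'" "R x w'" using pick_max[of x w] wz assms by blast
    obtain z' where z': "mnp z'" "le z' z" "R z' y" using pick_min[of y z] wz assms by blast
    have X': "w' \<in> X" "z' \<in> X" using w' z' unfolding mnp_def mxp_def by auto
    have "le z' w'" using trn wz w' z' X' by blast
    have "le x w'" using R_le w' assms by blast
    have "le z' y" using R_le z' X' by blast
    have "R z' w'" using minmax[of z' w' x y] z' w' False assms \<open>le z' w'\<close> \<open>le x w'\<close> \<open>le z' y\<close> by blast
    thus ?thesis unfolding AA_def using w' z' X' by blast
  qed
qed

lemma BB_R: assumes "x \<in> X" "y \<in> X" shows "BB X le x y \<longleftrightarrow> BB X R x y"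
proof
  assume "BB X R x y"
  then obtain w1 w2 z where "w1 \<in> X" "w2 \<in> X" "z \<in> X" "R x w1" "R z w1" "R z w2" "R y w2" unfolding BB_def by blast
  moreover have "le x w1" "le z w1" "le z w2" "le y w2" using R_le calculation assms by blast+
  ultimately show "BB X le x y" unfolding BB_def by blast
next
  assume "BB X le x y"
  then obtain w1 w2 z where wz: "w1 \<in> X" "w2 \<in> X" "z \<in> X" "le x w1" "le z w1" "le z w2" "le y w2"
    unfolding BB_def by blast
  show "BB X R x y"
  proof (cases "mnp x \<and> mxp x \<and> le x y \<and> le y x")
    case True
    have "rp x \<in> X" using rp_prop assms by auto
    thus ?thesis using iso_case[of x y] True assms R_refl unfolding BB_def by blast
  next
    case False
    have F2: "\<not> (mnp y \<and> mxp y \<and> le y x \<and> le x y)"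
    proof
      assume h: "mnp y \<and> mxp y \<and> le y x \<and> le x y"
      then have "mnp x" "mxp x" using mnp_eq[of y x] mxp_eq[of y x] assms by auto
      thus False using False h by auto
    qed
    obtain w1' where w1': "mxp w1'" "le w1 w1'" "R x w1'" using pick_max[of x w1] wz assms by blast
    obtain w2' where w2': "mxp w2'" "le w2 w2'" "R y w2'" using pick_max[of y w2] wz assms by blast
    obtain z' where z': "mnp z'" "le z' z" using ex_min wz by blast
    have X': "w1' \<in> X" "w2' \<in> X" "z' \<in> X" using w1' w2' z' unfolding mnp_def mxp_def by auto
    have "le z' w1" using trn[of z' z w1] wz z' X' by blast
    then have l1: "le z' w1'" using trn[of z' w1 w1'] wz w1' X' by blast
    have "le z' w2" using trn[of z' z w2] wz z' X' by blast
    then have l2: "le z' w2'" using trn[of z' w2 w2'] wz w2' X' by blast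
    have "le x w1'" "le y w2'" using R_le w1' w2' assms by blast+
    have r1: "R z' w1'"
    proof (cases "le w1' z'")
      case False thus ?thesis using z' w1' l1 unfolding R_def by auto
    next
      case True
      have "mxp z'" using mxp_eq[of w1' z'] w1'(1) X' True l1 by blast
      have "le w2' z'" using \<open>mxp z'\<close> X' l2 unfolding mxp_def by blast
      have "le y z'" using trn[of y w2' z'] assms X' \<open>le y w2'\<close> \<open>le w2' z'\<close> by blast
      have "le z' y" using z'(1) \<open>le y z'\<close> assms unfolding mnp_def by blast
      show ?thesis by (rule minmax[OF z'(1) w1'(1) l1 False assms \<open>le x w1'\<close> \<open>le z' y\<close>])
    qed
    have r2: "R z' w2'"
    proof (cases "le w2' z'")
      case False thus ?thesis using z' w2' l2 unfolding R_def by auto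
    next
      case True
      have "mxp z'" using mxp_eq[of w2' z'] w2'(1) X' True l2 by blast
      have "le w1' z'" using \<open>mxp z'\<close> X' l1 unfolding mxp_def by blast
      have "le x z'" using trn[of x w1' z'] assms X' \<open>le x w1'\<close> \<open>le w1' z'\<close> by blast
      have "le z' x" using z'(1) \<open>le x z'\<close> assms unfolding mnp_def by blast
      show ?thesis by (rule minmax[OF z'(1) w2'(1) l2 F2 assms(2,1) \<open>le y w2'\<close> \<open>le z' x\<close>])
    qed
    show ?thesis unfolding BB_def using w1' w2' r1 r2 X' by blast
  qed
qed

end


definition lT :: "'a set set \<Rightarrow> 'a \<Rightarrow> 'a \<Rightarrow> bool" where
  "lT T a b \<longleftrightarrow> a \<in> min_open T b"

lemma AA_cong: assumes "\<And>a b. a \<in> X \<Longrightarrow> b \<in> X \<Longrightarrow> l1 a b = l2 a b" "x \<in> X" "y \<in> X"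
  shows "AA X l1 x y = AA X l2 x y"
  unfolding AA_def using assms by auto

lemma BB_cong: assumes "\<And>a b. a \<in> X \<Longrightarrow> b \<in> X \<Longrightarrow> l1 a b = l2 a b" "x \<in> X" "y \<in> X"
  shows "BB X l1 x y = BB X l2 x y"
  unfolding BB_def using assms by auto

lemma sepb_a: "sep_b X T x y \<longleftrightarrow> sep_a X T y x"
  unfolding sep_a_def sep_b_def by blast

locale ftop =
  fixes X :: "'a set" and T :: "'a set set"
  assumes ft: "finite_topology X T"
begin

lemma fX: "finite X" and TX: "T \<subseteq> Pow X" and XT: "X \<in> T"
  and UnT: "\<And>S. S \<subseteq> T \<Longrightarrow> \<Union>S \<in> T"
  and InT: "\<And>S. S \<subseteq> T \<Longrightarrow> S \<noteq> {} \<Longrightarrow> \<Inter>S \<in> T"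
  using ft unfolding finite_topology_def by auto

lemma mo_open: "x \<in> X \<Longrightarrow> min_open T x \<in> T"
  unfolding min_open_def by (rule InT) (use XT in auto)

lemma mo_sub: "U \<in> T \<Longrightarrow> x \<in> U \<Longrightarrow> min_open T x \<subseteq> U"
  unfolding min_open_def by blast

lemma mo_self: "x \<in> min_open T x"
  unfolding min_open_def by blast

lemma mo_X: "x \<in> X \<Longrightarrow> min_open T x \<subseteq> X"
  using mo_sub XT by blast

lemma lT_trans: assumes "c \<in> X" "lT T a b" "lT T b c" shows "lT T a c"
proof -
  have "min_open T b \<subseteq> min_open T c" using mo_sub[OF mo_open[OF assms(1)]] assms(3) unfolding lT_def .
  thus ?thesis using assms(2) unfolding lT_def by blast
qed

lemma fpre: "fpre X (lT T)"
proof
  show "finite X" by (rule fX)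
  show "lT T a a" for a unfolding lT_def by (rule mo_self)
  show "lT T a c" if "a \<in> X" "b \<in> X" "c \<in> X" "lT T a b" "lT T b c" for a b c
    using lT_trans that by blast
qed

lemma Un_open: "A \<subseteq> X \<Longrightarrow> \<Union>(min_open T ` A) \<in> T"
  by (rule UnT) (auto intro: mo_open)

lemma cl_up: assumes "closed_in_top X T J" "x \<in> J" "lT T x w" "w \<in> X" shows "w \<in> J"
proof (rule ccontr)
  assume "w \<notin> J"
  then have "w \<in> X - J" using assms by auto
  moreover have "X - J \<in> T" using assms unfolding closed_in_top_def by auto
  ultimately have "min_open T w \<subseteq> X - J" using mo_sub by blast
  thus False using assms unfolding lT_def by blast
qed

lemma op_down: "U \<in> T \<Longrightarrow> w \<in> U \<Longrightarrow> lT T z w \<Longrightarrow> z \<in> U"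
  using mo_sub unfolding lT_def by blast

lemma cl_closed: assumes "x \<in> X" shows "closed_in_top X T {w\<in>X. lT T x w}"
proof -
  let ?J = "{w\<in>X. lT T x w}"
  have "X - ?J = \<Union>(min_open T ` (X - ?J))"
  proof
    show "X - ?J \<subseteq> \<Union>(min_open T ` (X - ?J))" using mo_self by blast
    show "\<Union>(min_open T ` (X - ?J)) \<subseteq> X - ?J"
    proof
      fix u assume "u \<in> \<Union>(min_open T ` (X - ?J))"
      then obtain v where v: "v \<in> X - ?J" "u \<in> min_open T v" by blast
      have "u \<in> X" using v mo_X by blast
      moreover have "\<not> lT T x u" using v lT_trans[of v x u] unfolding lT_def by auto
      ultimately show "u \<in> X - ?J" by auto
    qed
  qed
  moreover have "\<Union>(min_open T ` (X - ?J)) \<in> T" by (rule Un_open) auto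
  ultimately show ?thesis unfolding closed_in_top_def by auto
qed

lemma sepa_iff: assumes "x \<in> X" "y \<in> X" shows "sep_a X T x y \<longleftrightarrow> \<not> AA X (lT T) x y"
proof
  assume "sep_a X T x y"
  then obtain J UJ Uy where h: "closed_in_top X T J" "UJ \<in> T" "Uy \<in> T" "x \<in> J" "J \<subseteq> UJ" "y \<in> Uy" "UJ \<inter> Uy = {}"
    unfolding sep_a_def by blast
  show "\<not> AA X (lT T) x y"
  proof
    assume "AA X (lT T) x y"
    then obtain w z where wz: "w \<in> X" "z \<in> X" "lT T x w" "lT T z w" "lT T z y" unfolding AA_def by blast
    have "w \<in> J" using cl_up[OF h(1) h(4) wz(3) wz(1)] .
    then have "w \<in> UJ" using h(5) by blast
    then have "z \<in> UJ" using op_down[OF h(2) _ wz(4)] by blast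
    moreover have "z \<in> Uy" using op_down[OF h(3) h(6) wz(5)] .
    ultimately show False using h(7) by blast
  qed
next
  assume na: "\<not> AA X (lT T) x y"
  let ?J = "{w\<in>X. lT T x w}"
  have "closed_in_top X T ?J" using cl_closed assms by blast
  moreover have "\<Union>(min_open T ` ?J) \<in> T" by (rule Un_open) auto
  moreover have "min_open T y \<in> T" using mo_open assms by blast
  moreover have "x \<in> ?J" using assms mo_self unfolding lT_def by auto
  moreover have "?J \<subseteq> \<Union>(min_open T ` ?J)" using mo_self by blast
  moreover have "y \<in> min_open T y" using mo_self by blast
  moreover have "\<Union>(min_open T ` ?J) \<inter> min_open T y = {}"
  proof (rule ccontr)
    assume "\<not> ?thesis"
    then obtain w u where wu: "w \<in> ?J" "u \<in> min_open T w" "u \<in> min_open T y" by blast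
    have "u \<in> X" using wu mo_X by blast
    have w: "w \<in> X" "x \<in> min_open T w" using wu(1) unfolding lT_def by auto
    have "AA X (lT T) x y" unfolding AA_def lT_def
      apply (rule bexI[of _ w, rotated], rule w(1))
      apply (rule bexI[of _ u, rotated], rule \<open>u \<in> X\<close>)
      using w wu by blast
    thus False using na by blast
  qed
  ultimately show "sep_a X T x y" unfolding sep_a_def
    apply -
    apply (rule exI[of _ ?J])
    apply (rule exI[of _ "\<Union>(min_open T ` ?J)"])
    apply (rule exI[of _ "min_open T y"])
    by blast
qed

lemma T4_iff: assumes "x \<in> X" "y \<in> X" shows "T4_sep X T x y \<longleftrightarrow> \<not> BB X (lT T) x y"
proof
  assume "T4_sep X T x y"
  then obtain J K UJ UK where h: "closed_in_top X T J" "closed_in_top X T K" "x \<in> J" "y \<in> K"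
    "UJ \<in> T" "UK \<in> T" "J \<subseteq> UJ" "K \<subseteq> UK" "UJ \<inter> UK = {}"
    unfolding T4_sep_def by blast
  show "\<not> BB X (lT T) x y"
  proof
    assume "BB X (lT T) x y"
    then obtain w1 w2 z where wz: "w1 \<in> X" "w2 \<in> X" "z \<in> X" "lT T x w1" "lT T z w1" "lT T z w2" "lT T y w2"
      unfolding BB_def by blast
    have "w1 \<in> J" using cl_up[OF h(1) h(3) wz(4) wz(1)] .
    then have "w1 \<in> UJ" using h(7) by blast
    then have z1: "z \<in> UJ" using op_down[OF h(5) _ wz(5)] by blast
    have "w2 \<in> K" using cl_up[OF h(2) h(4) wz(7) wz(2)] .
    then have "w2 \<in> UK" using h(8) by blast
    then have "z \<in> UK" using op_down[OF h(6) _ wz(6)] by blast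
    thus False using z1 h(9) by blast
  qed
next
  assume na: "\<not> BB X (lT T) x y"
  let ?J = "{w\<in>X. lT T x w}"
  let ?K = "{w\<in>X. lT T y w}"
  have "closed_in_top X T ?J" "closed_in_top X T ?K" using cl_closed assms by blast+
  moreover have "\<Union>(min_open T ` ?J) \<in> T" "\<Union>(min_open T ` ?K) \<in> T" by (rule Un_open, auto)+
  moreover have "x \<in> ?J" "y \<in> ?K" using assms mo_self unfolding lT_def by auto
  moreover have "?J \<subseteq> \<Union>(min_open T ` ?J)" "?K \<subseteq> \<Union>(min_open T ` ?K)" using mo_self by blast+
  moreover have "\<Union>(min_open T ` ?J) \<inter> \<Union>(min_open T ` ?K) = {}"
  proof (rule ccontr)
    assume "\<not> ?thesis"
    then obtain w1 w2 u where wu: "w1 \<in> ?J" "w2 \<in> ?K" "u \<in> min_open T w1" "u \<in> min_open T w2" by blast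
    have "u \<in> X" using wu mo_X by blast
    have w: "w1 \<in> X" "x \<in> min_open T w1" "w2 \<in> X" "y \<in> min_open T w2" using wu(1,2) unfolding lT_def by auto
    have "BB X (lT T) x y" unfolding BB_def lT_def
      apply (rule bexI[of _ w1, rotated], rule w(1))
      apply (rule bexI[of _ w2, rotated], rule w(3))
      apply (rule bexI[of _ u, rotated], rule \<open>u \<in> X\<close>)
      using w wu by blast
    thus False using na by blast
  qed
  ultimately show "T4_sep X T x y" unfolding T4_sep_def
    apply -
    apply (rule exI[of _ ?J])
    apply (rule exI[of _ ?K])
    apply (rule exI[of _ "\<Union>(min_open T ` ?J)"])
    apply (rule exI[of _ "\<Union>(min_open T ` ?K)"])
    by blast
qed

lemma sep_iff: assumes "x \<in> X" "y \<in> X"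
  shows "sep_of i X T x y \<longleftrightarrow> (case i of T3p \<Rightarrow> \<not> AA X (lT T) x y \<or> \<not> AA X (lT T) y x
     | T3pp \<Rightarrow> \<not> AA X (lT T) x y \<and> \<not> AA X (lT T) y x | T4 \<Rightarrow> \<not> BB X (lT T) x y)"
  using assms by (cases i) (simp_all add: T3p_sep_def T3pp_sep_def sepb_a sepa_iff T4_iff)

end

definition Tp :: "'a set \<Rightarrow> ('a \<Rightarrow> 'a \<Rightarrow> bool) \<Rightarrow> 'a set set" where
  "Tp X R = {U. U \<subseteq> X \<and> (\<forall>a\<in>X. \<forall>b\<in>U. R a b \<longrightarrow> a \<in> U)}"

lemma ft_Tp: assumes "finite X" shows "finite_topology X (Tp X R)"
  unfolding finite_topology_def
proof (intro conjI allI impI)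
  show "finite X" by fact
  show "Tp X R \<subseteq> Pow X" unfolding Tp_def by auto
  show "{} \<in> Tp X R" unfolding Tp_def by auto
  show "X \<in> Tp X R" unfolding Tp_def by auto
  fix S assume S: "S \<subseteq> Tp X R"
  show "\<Union>S \<in> Tp X R" unfolding Tp_def
  proof (intro CollectI conjI ballI impI)
    show "\<Union>S \<subseteq> X" using S unfolding Tp_def by auto
    fix a b assume "a \<in> X" "b \<in> \<Union>S" "R a b"
    then obtain U where U: "U \<in> S" "b \<in> U" by auto
    then have "U \<in> Tp X R" using S by auto
    then have "a \<in> U" using U \<open>a \<in> X\<close> \<open>R a b\<close> unfolding Tp_def by blast
    then show "a \<in> \<Union>S" using U by auto
  qed
next
  fix S assume S: "S \<subseteq> Tp X R \<and> S \<noteq> {}"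
  then obtain U0 where "U0 \<in> S" by auto
  show "\<Inter>S \<in> Tp X R" unfolding Tp_def
  proof (intro CollectI conjI ballI impI)
    show "\<Inter>S \<subseteq> X" using S \<open>U0 \<in> S\<close> unfolding Tp_def by auto
    fix a b assume ab: "a \<in> X" "b \<in> \<Inter>S" "R a b"
    show "a \<in> \<Inter>S"
    proof
      fix U assume U: "U \<in> S"
      then have "U \<in> Tp X R" "b \<in> U" using S ab by auto
      then show "a \<in> U" using ab unfolding Tp_def by blast
    qed
  qed
qed

lemma mo_Tp: assumes "y \<in> X" "\<And>a. a \<in> X \<Longrightarrow> R a a"
  "\<And>a b c. a \<in> X \<Longrightarrow> b \<in> X \<Longrightarrow> c \<in> X \<Longrightarrow> R a b \<Longrightarrow> R b c \<Longrightarrow> R a c"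
  shows "min_open (Tp X R) y = {a\<in>X. R a y}"
proof -
  define D where "D = {a\<in>X. R a y}"
  have all: "\<forall>a\<in>X. \<forall>b\<in>D. R a b \<longrightarrow> a \<in> D"
  proof (intro ballI impI)
    fix a b assume "a \<in> X" "b \<in> D" "R a b"
    then show "a \<in> D" using assms(1) assms(3)[of a b y] unfolding D_def by auto
  qed
  have sub: "D \<subseteq> X" unfolding D_def by auto
  have DT: "D \<in> Tp X R" unfolding Tp_def using all sub by blast
  have yD: "y \<in> D" using assms(1,2) unfolding D_def by auto
  have "min_open (Tp X R) y \<subseteq> D" unfolding min_open_def using DT yD by blast
  moreover have "D \<subseteq> min_open (Tp X R) y"
  proof
    fix a assume a: "a \<in> D"
    show "a \<in> min_open (Tp X R) y" unfolding min_open_def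
    proof
      fix U assume "U \<in> {U \<in> Tp X R. y \<in> U}"
      then have "U \<in> Tp X R" "y \<in> U" by auto
      then show "a \<in> U" using a unfolding Tp_def D_def by blast
    qed
  qed
  ultimately show ?thesis unfolding D_def by blast
qed

theorem lemma3p6:
  fixes X :: "'a set" and T :: "'a set set" and i :: sep_axiom
  assumes "finite X" and "finite_topology X T"
  shows "\<exists>T'. finite_topology X T' \<and>
           graph_iso X (G_adj i X T) X (G_adj i X T') \<and>
           top_height X T' \<le> 3"
proof -
  interpret F: ftop X T using assms(2) by unfold_locales
  interpret P: fpre X "lT T" by (rule F.fpre)
  define T' where "T' = Tp X P.R"
  have ft': "finite_topology X T'" unfolding T'_def using ft_Tp assms(1) by blast
  interpret F': ftop X T' using ft' by unfold_locales
  have moT': "min_open T' y = {a\<in>X. P.R a y}" if "y \<in> X" for y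
    unfolding T'_def by (rule mo_Tp[OF that]) (auto intro: P.R_refl P.R_trans)
  have lTe: "lT T' a b = P.R a b" if "a \<in> X" "b \<in> X" for a b
    using moT'[OF that(2)] that unfolding lT_def by auto
  have AAe: "AA X (lT T') x y = AA X (lT T) x y" if "x \<in> X" "y \<in> X" for x y
    using AA_cong[of X "lT T'" P.R, OF lTe that] P.AA_R[OF that] by simp
  have BBe: "BB X (lT T') x y = BB X (lT T) x y" if "x \<in> X" "y \<in> X" for x y
    using BB_cong[of X "lT T'" P.R, OF lTe that] P.BB_R[OF that] by simp
  have adj: "G_adj i X T x y = G_adj i X T' x y" if "x \<in> X" "y \<in> X" for x y
    unfolding G_adj_def using F.sep_iff[OF that, of i] F'.sep_iff[OF that, of i] AAe BBe that
    by (cases i) auto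
  have iso: "graph_iso X (G_adj i X T) X (G_adj i X T')"
    unfolding graph_iso_def using adj by (intro exI[of _ id]) auto
  let ?S = "{h. \<exists>v :: nat \<Rightarrow> 'a. inj_on v {..<h} \<and> v ` {..<h} \<subseteq> X \<and>
       (\<forall>j. Suc j < h \<longrightarrow> min_open T' (v j) \<subseteq> min_open T' (v (Suc j)))}"
  have bnd: "h \<le> 3" if hS: "h \<in> ?S" for h
  proof (rule ccontr)
    assume h3: "\<not> h \<le> 3"
    from hS obtain v where v: "inj_on v {..<h}" "v ` {..<h} \<subseteq> X"
       "\<And>j. Suc j < h \<Longrightarrow> min_open T' (v j) \<subseteq> min_open T' (v (Suc j))"
      unfolding mem_Collect_eq by blast
    have X: "v j \<in> X" if "j < 4" for j using v(2) that h3 by auto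
    have ne: "v j \<noteq> v (Suc j)" if "j < 3" for j
    proof
      assume e: "v j = v (Suc j)"
      have "j = Suc j" by (rule inj_onD[OF v(1) e]) (use that h3 in auto)
      thus False by simp
    qed
    have r: "P.R (v j) (v (Suc j))" if "j < 3" for j
    proof -
      have "v j \<in> min_open T' (v (Suc j))" using v(3)[of j] F'.mo_self that h3 by auto
      moreover have "v j \<in> X" "v (Suc j) \<in> X" using X that by auto
      ultimately show ?thesis using moT' by auto
    qed
    have x0: "v 0 \<in> X" and x1: "v (Suc 0) \<in> X" and x2: "v (Suc (Suc 0)) \<in> X"
      and x3: "v (Suc (Suc (Suc 0))) \<in> X" using X by auto
    have n0: "v 0 \<noteq> v (Suc 0)" and n1: "v (Suc 0) \<noteq> v (Suc (Suc 0))"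
      and n2: "v (Suc (Suc 0)) \<noteq> v (Suc (Suc (Suc 0)))" using ne by auto
    have r0: "P.R (v 0) (v (Suc 0))" and r1: "P.R (v (Suc 0)) (v (Suc (Suc 0)))"
      and r2: "P.R (v (Suc (Suc 0))) (v (Suc (Suc (Suc 0))))" using r by auto
    show False by (rule P.chain[OF x0 x1 x2 x3 n0 n1 n2 r0 r1 r2])
  qed
  have z: "0 \<in> ?S" by auto
  have ne: "?S \<noteq> {}" using z by blast
  have fin: "finite ?S" using bnd by (meson finite_nat_set_iff_bounded_le)
  have "Max ?S \<le> 3" using bnd by (intro Max.boundedI[OF fin ne]) blast
  then have "top_height X T' \<le> 3" unfolding top_height_def .
  thus ?thesis using ft' iso by blast
qed

end
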